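(* Let $\mathsf{C}_B\subset\mathbf{R}^3$ be the cone generated by $x_{+0}=(1,1,0)$, $x_{-0}=(1,-1,0)$, $x_{0+}=(1,0,1)$, $x_{0-}=(1,0,-1)$, and let $\phi=(1,0,0)$ (as a linear form via the standard inner product). Then for every proper cone $\mathsf{C}_A\subset V_A$, $(\mathrm{Id}_{V_A}\otimes\gamma_2^\phi)(\mathsf{C}_A\otimes_{\max}\mathsf{C}_B\otimes_{\max}\mathsf{C}_B)=\mathsf{C}_A\otimes_{\min}\mathsf{C}_B$. More precisely, with $\psi_{\pm\pm}=\frac12(1,\pm1,\pm1)$, for every $y\in\mathbf{R}^3\otimes\mathbf{R}^3$, \[2\gamma_2^\phi(y)=(\psi_{++}\otimes\psi_{+-}+\psi_{+-}\otimes\psi_{++})(y)\,x_{+0}+(\psi_{-+}\otimes\psi_{--}+\psi_{--}\otimes\psi_{-+})(y)\,x_{-0}+(\psi_{++}\otimes\psi_{-+}+\psi_{-+}\otimes\psi_{++})(y)\,x_{0+}+(\psi_{+-}\otimes\psi_{--}+\psi_{--}\otimes\psi_{+-})(y)\,x_{0-}.\]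
   Context: Proper cone: closed convex cone in a finite-dimensional real vector space, containing no line, not contained in a hyperplane; $\mathsf{C}^*$ is its dual cone. $\mathsf{C}_1\otimes_{\min}\mathsf{C}_2=\mathrm{conv}\{x\otimes y:x\in\mathsf{C}_1,y\in\mathsf{C}_2\}$ and $\mathsf{C}_1\otimes_{\max}\mathsf{C}_2=\{z:(f\otimes g)(z)\ge0\ \forall f\in\mathsf{C}_1^*,g\in\mathsf{C}_2^*\}$. $\gamma_2^\phi=\frac12(\mathrm{Id}\otimes\phi+\phi\otimes\mathrm{Id}):\mathbf{R}^3\otimes\mathbf{R}^3\to\mathbf{R}^3$. *)

theory Defs
  imports "HOL-Analysis.Analysis"
begin

text \<open>Finite-dimensional real vector spaces are modelled as real^'i for a finite index
type 'i; the tensor product of real^'i and real^'j is modelled as real^('i \<times> 'j),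
with the elementary tensor of x and y having components x_i y_j. Linear forms are
identified with vectors via the standard inner product.\<close>

definition tensor :: "real^'i \<Rightarrow> real^'j \<Rightarrow> real^('i \<times> 'j)" (infixr "\<otimes>\<^sub>v" 70) where
  "x \<otimes>\<^sub>v y = (\<chi> p. x $ fst p * y $ snd p)"

definition proper_cone :: "(real^'i) set \<Rightarrow> bool" where
  "proper_cone C \<longleftrightarrow> closed C \<and> convex C \<and> cone C \<and> 0 \<in> C
     \<and> C \<inter> uminus ` C = {0} \<and> span C = UNIV"

definition dual_cone :: "(real^'i) set \<Rightarrow> (real^'i) set" where
  "dual_cone C = {f. \<forall>x\<in>C. 0 \<le> f \<bullet> x}"

definition tensor_min :: "(real^'i) set \<Rightarrow> (real^'j) set \<Rightarrow> (real^('i \<times> 'j)) set" where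
  "tensor_min C1 C2 = convex hull {x \<otimes>\<^sub>v y | x y. x \<in> C1 \<and> y \<in> C2}"

definition tensor_max :: "(real^'i) set \<Rightarrow> (real^'j) set \<Rightarrow> (real^('i \<times> 'j)) set" where
  "tensor_max C1 C2 = {z. \<forall>f\<in>dual_cone C1. \<forall>g\<in>dual_cone C2. 0 \<le> (f \<otimes>\<^sub>v g) \<bullet> z}"

text \<open>gamma_2^phi = 1/2 (Id \<otimes> phi + phi \<otimes> Id) : R^k \<otimes> R^k \<rightarrow> R^k.\<close>
definition gamma2 :: "real^'k \<Rightarrow> real^('k \<times> 'k) \<Rightarrow> real^'k" where
  "gamma2 \<phi> y = (\<chi> k. (1/2) * ((\<Sum>j\<in>UNIV. \<phi> $ j * y $ (k, j)) + (\<Sum>i\<in>UNIV. \<phi> $ i * y $ (i, k))))"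

text \<open>Id_{V_A} \<otimes> L for a linear map L : real^('i\<times>'j) \<rightarrow> real^'k, acting on
(V_A \<otimes> R^i) \<otimes> R^j = real^(('a \<times> 'i) \<times> 'j).\<close>
definition id_tensor :: "(real^('i::finite \<times> 'j::finite) \<Rightarrow> real^'k::finite) \<Rightarrow> real^(('a::finite \<times> 'i) \<times> 'j) \<Rightarrow> real^('a \<times> 'k)" where
  "id_tensor L z = (\<chi> p. (L (\<chi> q. z $ ((fst p, fst q), snd q))) $ snd p)"

definition xpp :: "real^3" where "xpp = vector [1, 1, 0]"
definition xmp :: "real^3" where "xmp = vector [1, -1, 0]"
definition xpq :: "real^3" where "xpq = vector [1, 0, 1]"
definition xmq :: "real^3" where "xmq = vector [1, 0, -1]"

definition CB :: "(real^3) set" where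
  "CB = convex_cone hull {xpp, xmp, xpq, xmq}"

definition phiB :: "real^3" where "phiB = vector [1, 0, 0]"

definition psi :: "real \<Rightarrow> real \<Rightarrow> real^3" where
  "psi s t = vector [1/2, s/2, t/2]"

end

theory Submission imports Defs begin

lemma sum_pair: "sum (f::'i::finite\<times>'j::finite\<Rightarrow>real) UNIV = (\<Sum>i\<in>UNIV. \<Sum>j\<in>UNIV. f (i,j))"
  by (simp add: sum.cartesian_product UNIV_Times_UNIV[symmetric] del: UNIV_Times_UNIV)

lemma tensor_inner: "(f \<otimes>\<^sub>v g) \<bullet> (u \<otimes>\<^sub>v v) = (f \<bullet> u) * (g \<bullet> v)"
  by (simp add: tensor_def inner_vec_def sum_pair sum_product algebra_simps)

lemma tensor_max_prod:
  assumes "x \<in> C1" "y \<in> C2" shows "x \<otimes>\<^sub>v y \<in> tensor_max C1 C2"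
  using assms by (auto simp: tensor_max_def tensor_inner dual_cone_def)

lemma convex_tensor_max: "convex (tensor_max C1 C2)"
  unfolding convex_def tensor_max_def
  by (auto simp: inner_add_right)

lemma linear_idg: "linear (id_tensor (gamma2 \<phi>))"
  by (rule linearI) (simp_all add: vec_eq_iff id_tensor_def gamma2_def sum.distrib
      sum_distrib_left algebra_simps)

lemma tensor_scale2: "x \<otimes>\<^sub>v (c *\<^sub>R y) = c *\<^sub>R (x \<otimes>\<^sub>v y)"
  by (simp add: tensor_def vec_eq_iff)

lemma gamma2_scale: "gamma2 \<phi> (c *\<^sub>R y) = c *\<^sub>R gamma2 \<phi> y"
  by (simp add: gamma2_def vec_eq_iff sum_distrib_left algebra_simps)

lemma gamma2_sq: "gamma2 \<phi> (y \<otimes>\<^sub>v y) = (\<phi> \<bullet> y) *\<^sub>R y"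
  by (simp add: gamma2_def vec_eq_iff tensor_def inner_vec_def sum_distrib_left sum_distrib_right algebra_simps)

lemma idg_prod: "id_tensor (gamma2 \<phi>) ((a \<otimes>\<^sub>v u) \<otimes>\<^sub>v v) = a \<otimes>\<^sub>v gamma2 \<phi> (u \<otimes>\<^sub>v v)"
  by (simp add: id_tensor_def gamma2_def vec_eq_iff tensor_def sum_distrib_left algebra_simps)

definition KB :: "(real^3) set" where "KB = {y. \<bar>y$2\<bar> + \<bar>y$3\<bar> \<le> y$1}"

lemma CB_sub: "CB \<subseteq> KB"
  unfolding CB_def
proof (rule hull_minimal)
  show "{xpp, xmp, xpq, xmq} \<subseteq> KB"
    by (simp add: KB_def xpp_def xmp_def xpq_def xmq_def)
  show "convex_cone KB"
    unfolding convex_cone_iff KB_def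
  proof (intro conjI ballI allI impI)
    fix x y :: "real^3" assume "x \<in> {y. \<bar>y$2\<bar> + \<bar>y$3\<bar> \<le> y$1}" "y \<in> {y. \<bar>y$2\<bar> + \<bar>y$3\<bar> \<le> y$1}"
    then show "x + y \<in> {y. \<bar>y$2\<bar> + \<bar>y$3\<bar> \<le> y$1}" by auto
  next
    fix x :: "real^3" and c :: real assume "x \<in> {y. \<bar>y$2\<bar> + \<bar>y$3\<bar> \<le> y$1}" "0 \<le> c"
    then show "c *\<^sub>R x \<in> {y. \<bar>y$2\<bar> + \<bar>y$3\<bar> \<le> y$1}"
      by (auto simp: abs_mult) (metis distrib_left mult_left_mono)
  qed simp
qed

lemma cc_CB: "convex_cone CB"
  unfolding CB_def by (simp add: convex_cone_convex_cone_hull)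

lemma psi_dual: assumes "s \<in> {1,-1}" "t \<in> {1,-1}" shows "psi s t \<in> dual_cone CB"
  unfolding dual_cone_def
proof
  show "\<forall>x\<in>CB. 0 \<le> psi s t \<bullet> x"
  proof
    fix x assume "x \<in> CB" then have "x \<in> KB" using CB_sub by auto
    then show "0 \<le> psi s t \<bullet> x" using assms
      by (auto simp: KB_def psi_def inner_vec_def sum_3)
  qed
qed

lemma bipolar:
  fixes C :: "(real^'n) set"
  assumes "closed C" "convex C" "cone C" "0 \<in> C" "\<forall>f\<in>dual_cone C. 0 \<le> f \<bullet> z"
  shows "z \<in> C"
proof (rule ccontr)
  assume "z \<notin> C"
  from separating_hyperplane_closed_point[OF assms(2,1) this]
  obtain a b where ab: "a \<bullet> z < b" "\<forall>x\<in>C. b < a \<bullet> x" by blast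
  have b0: "b < 0" using ab(2) assms(4) by auto
  have "a \<in> dual_cone C"
    unfolding dual_cone_def
  proof (safe)
    fix x assume x: "x \<in> C"
    show "0 \<le> a \<bullet> x"
    proof (rule ccontr)
      assume n: "\<not> 0 \<le> a \<bullet> x"
      define c where "c = b / (a \<bullet> x)"
      have "c \<ge> 0" using n b0 by (simp add: c_def divide_nonpos_neg)
      then have "c *\<^sub>R x \<in> C" using assms(3) x unfolding cone_def by auto
      then have "b < a \<bullet> (c *\<^sub>R x)" using ab(2) by auto
      moreover have "a \<bullet> (c *\<^sub>R x) = b" using n by (simp add: c_def)
      ultimately show False by simp
    qed
  qed
  then show False using assms(5) ab(1) b0 by force
qed

definition zs :: "real^(('a::finite \<times> 'i::finite) \<times> 'j::finite) \<Rightarrow> 'a \<Rightarrow> real^('i \<times> 'j)" where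
  "zs z a = (\<chi> q. z $ ((a, fst q), snd q))"

lemma slice_inner: "f \<bullet> (\<chi> a. (u \<otimes>\<^sub>v v) \<bullet> zs z a) = ((f \<otimes>\<^sub>v u) \<otimes>\<^sub>v v) \<bullet> z"
  by (simp add: inner_vec_def zs_def tensor_def sum_pair sum_distrib_left algebra_simps)

lemma slice_nonneg:
  assumes z: "z \<in> tensor_max (tensor_max CA CB) CB" and f: "f \<in> dual_cone CA"
    and u: "u \<in> dual_cone CB" and v: "v \<in> dual_cone CB"
  shows "0 \<le> f \<bullet> (\<chi> a. (u \<otimes>\<^sub>v v + v \<otimes>\<^sub>v u) \<bullet> zs z a)"
proof -
  have fu: "f \<otimes>\<^sub>v u \<in> dual_cone (tensor_max CA CB)" "f \<otimes>\<^sub>v v \<in> dual_cone (tensor_max CA CB)"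
    using f u v by (auto simp: dual_cone_def tensor_max_def)
  have "f \<bullet> (\<chi> a. (u \<otimes>\<^sub>v v + v \<otimes>\<^sub>v u) \<bullet> zs z a)
     = f \<bullet> (\<chi> a. (u \<otimes>\<^sub>v v) \<bullet> zs z a) + f \<bullet> (\<chi> a. (v \<otimes>\<^sub>v u) \<bullet> zs z a)"
    by (simp add: inner_vec_def inner_add_left sum.distrib algebra_simps)
  also have "\<dots> = ((f \<otimes>\<^sub>v u) \<otimes>\<^sub>v v) \<bullet> z + ((f \<otimes>\<^sub>v v) \<otimes>\<^sub>v u) \<bullet> z"
    by (simp add: slice_inner)
  moreover have "0 \<le> ((f \<otimes>\<^sub>v u) \<otimes>\<^sub>v v) \<bullet> z" "0 \<le> ((f \<otimes>\<^sub>v v) \<otimes>\<^sub>v u) \<bullet> z"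
    using z fu u v unfolding tensor_max_def by blast+
  ultimately show ?thesis by linarith
qed

lemma formula: "2 *\<^sub>R gamma2 phiB y =
            ((psi 1 1 \<otimes>\<^sub>v psi 1 (-1) + psi 1 (-1) \<otimes>\<^sub>v psi 1 1) \<bullet> y) *\<^sub>R xpp
          + ((psi (-1) 1 \<otimes>\<^sub>v psi (-1) (-1) + psi (-1) (-1) \<otimes>\<^sub>v psi (-1) 1) \<bullet> y) *\<^sub>R xmp
          + ((psi 1 1 \<otimes>\<^sub>v psi (-1) 1 + psi (-1) 1 \<otimes>\<^sub>v psi 1 1) \<bullet> y) *\<^sub>R xpq
          + ((psi 1 (-1) \<otimes>\<^sub>v psi (-1) (-1) + psi (-1) (-1) \<otimes>\<^sub>v psi 1 (-1)) \<bullet> y) *\<^sub>R xmq"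
  unfolding vec_eq_iff
  apply (intro allI)
  subgoal for i
  using exhaust_3[of i]
  by (auto simp: gamma2_def phiB_def psi_def tensor_def xpp_def xmp_def xpq_def xmq_def
      inner_vec_def sum_pair sum_3 algebra_simps)
  done

lemma part1:
  fixes CA :: "(real^'n) set"
  assumes "proper_cone CA"
  shows "id_tensor (gamma2 phiB) ` tensor_max (tensor_max CA CB) CB \<subseteq> tensor_min CA CB"
proof
  fix w assume "w \<in> id_tensor (gamma2 phiB) ` tensor_max (tensor_max CA CB) CB"
  then obtain z where z: "z \<in> tensor_max (tensor_max CA CB) CB" and w: "w = id_tensor (gamma2 phiB) z"
    by blast
  have CA: "closed CA" "convex CA" "cone CA" "0 \<in> CA" using assms unfolding proper_cone_def by auto
  have inCA: "(\<chi> a. (u \<otimes>\<^sub>v v + v \<otimes>\<^sub>v u) \<bullet> zs z a) \<in> CA"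
    if "u \<in> dual_cone CB" "v \<in> dual_cone CB" for u v
    by (rule bipolar[OF CA]) (use slice_nonneg[OF z _ that] in auto)
  define S1 where "S1 = psi 1 1 \<otimes>\<^sub>v psi 1 (-1) + psi 1 (-1) \<otimes>\<^sub>v psi 1 1"
  define S2 where "S2 = psi (-1) 1 \<otimes>\<^sub>v psi (-1) (-1) + psi (-1) (-1) \<otimes>\<^sub>v psi (-1) 1"
  define S3 where "S3 = psi 1 1 \<otimes>\<^sub>v psi (-1) 1 + psi (-1) 1 \<otimes>\<^sub>v psi 1 1"
  define S4 where "S4 = psi 1 (-1) \<otimes>\<^sub>v psi (-1) (-1) + psi (-1) (-1) \<otimes>\<^sub>v psi 1 (-1)"
  define A1 where "A1 = (\<chi> a. S1 \<bullet> zs z a)"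
  define A2 where "A2 = (\<chi> a. S2 \<bullet> zs z a)"
  define A3 where "A3 = (\<chi> a. S3 \<bullet> zs z a)"
  define A4 where "A4 = (\<chi> a. S4 \<bullet> zs z a)"
  have A: "A1 \<in> CA" "A2 \<in> CA" "A3 \<in> CA" "A4 \<in> CA"
    unfolding A1_def A2_def A3_def A4_def S1_def S2_def S3_def S4_def
    by (rule inCA; rule psi_dual; simp)+
  have A2': "(2::real) *\<^sub>R A1 \<in> CA" "(2::real) *\<^sub>R A2 \<in> CA" "(2::real) *\<^sub>R A3 \<in> CA" "(2::real) *\<^sub>R A4 \<in> CA"
    using A CA(3) unfolding cone_def by auto
  have X: "xpp \<in> CB" "xmp \<in> CB" "xpq \<in> CB" "xmq \<in> CB"
    unfolding CB_def by (simp_all add: hull_inc)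
  define P where "P = {x \<otimes>\<^sub>v y | x y. x \<in> CA \<and> y \<in> CB}"
  have Pm: "(2 *\<^sub>R A1) \<otimes>\<^sub>v xpp \<in> tensor_min CA CB" "(2 *\<^sub>R A2) \<otimes>\<^sub>v xmp \<in> tensor_min CA CB"
     "(2 *\<^sub>R A3) \<otimes>\<^sub>v xpq \<in> tensor_min CA CB" "(2 *\<^sub>R A4) \<otimes>\<^sub>v xmq \<in> tensor_min CA CB"
    unfolding tensor_min_def by (rule hull_inc; use A2' X in blast)+
  have cv: "convex (tensor_min CA CB)" unfolding tensor_min_def by simp
  have g: "gamma2 phiB (zs z a) = (1/2) *\<^sub>R ((S1 \<bullet> zs z a) *\<^sub>R xpp + (S2 \<bullet> zs z a) *\<^sub>R xmp
      + (S3 \<bullet> zs z a) *\<^sub>R xpq + (S4 \<bullet> zs z a) *\<^sub>R xmq)" for a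
    using formula[of "zs z a"] unfolding S1_def S2_def S3_def S4_def
    by (metis (no_types, lifting) scaleR_scaleR scaleR_one divide_self_if zero_neq_numeral
          times_divide_eq_left mult.commute)
  have weq: "w = (1/2) *\<^sub>R ((1/2) *\<^sub>R ((2 *\<^sub>R A1) \<otimes>\<^sub>v xpp) + (1/2) *\<^sub>R ((2 *\<^sub>R A2) \<otimes>\<^sub>v xmp))
     + (1/2) *\<^sub>R ((1/2) *\<^sub>R ((2 *\<^sub>R A3) \<otimes>\<^sub>v xpq) + (1/2) *\<^sub>R ((2 *\<^sub>R A4) \<otimes>\<^sub>v xmq))"
  proof -
    have "w $ p = gamma2 phiB (zs z (fst p)) $ snd p" for p
      unfolding w id_tensor_def zs_def by simp
    then show ?thesis
      unfolding vec_eq_iff g by (simp add: tensor_def A1_def A2_def A3_def A4_def algebra_simps)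
  qed
  show "w \<in> tensor_min CA CB"
    unfolding weq
    by (intro convexD[OF cv] Pm) auto
qed

lemma part2:
  fixes CA :: "(real^'n) set"
  assumes "proper_cone CA"
  shows "tensor_min CA CB \<subseteq> id_tensor (gamma2 phiB) ` tensor_max (tensor_max CA CB) CB"
  unfolding tensor_min_def
proof (rule hull_minimal)
  show "convex (id_tensor (gamma2 phiB) ` tensor_max (tensor_max CA CB) CB)"
    by (rule convex_linear_image[OF linear_idg convex_tensor_max])
  show "{x \<otimes>\<^sub>v y | x y. x \<in> CA \<and> y \<in> CB} \<subseteq> id_tensor (gamma2 phiB) ` tensor_max (tensor_max CA CB) CB"
  proof safe
    fix a y assume a: "a \<in> CA" and y: "y \<in> CB"
    have yK: "\<bar>y$2\<bar> + \<bar>y$3\<bar> \<le> y$1" using y CB_sub by (auto simp: KB_def)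
    show "a \<otimes>\<^sub>v y \<in> id_tensor (gamma2 phiB) ` tensor_max (tensor_max CA CB) CB"
    proof (cases "y$1 = 0")
      case True
      then have "y$2 = 0" "y$3 = 0" using yK by auto
      then have "y = 0" using True unfolding vec_eq_iff
        by (metis exhaust_3 zero_index)
      then have "a \<otimes>\<^sub>v y = id_tensor (gamma2 phiB) 0"
        using linear_0[OF linear_idg] by (simp add: tensor_def vec_eq_iff)
      moreover have "0 \<in> tensor_max (tensor_max CA CB) CB" by (simp add: tensor_max_def)
      ultimately show ?thesis by blast
    next
      case False
      define t where "t = y$1"
      have t: "t > 0" using False yK t_def by auto
      have yt: "(1/t) *\<^sub>R y \<in> CB" using convex_cone_scaleR[OF cc_CB _ y] t by simp
      have mem: "(a \<otimes>\<^sub>v y) \<otimes>\<^sub>v ((1/t) *\<^sub>R y) \<in> tensor_max (tensor_max CA CB) CB"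
        by (intro tensor_max_prod a y yt)
      have ph: "phiB \<bullet> y = t" by (simp add: phiB_def t_def inner_vec_def sum_3)
      have "id_tensor (gamma2 phiB) ((a \<otimes>\<^sub>v y) \<otimes>\<^sub>v ((1/t) *\<^sub>R y)) = a \<otimes>\<^sub>v y"
        using t by (simp add: tensor_scale2 linear_scale[OF linear_idg] idg_prod gamma2_sq ph)
      then show ?thesis using mem by (metis image_eqI)
    qed
  qed
qed

theorem mainTheorem15:
  fixes CA :: "(real^'n) set"
  assumes "proper_cone CA"
  shows "id_tensor (gamma2 phiB) ` tensor_max (tensor_max CA CB) CB = tensor_min CA CB
    \<and> (\<forall>y :: real^(3 \<times> 3).
          2 *\<^sub>R gamma2 phiB y =
            ((psi 1 1 \<otimes>\<^sub>v psi 1 (-1) + psi 1 (-1) \<otimes>\<^sub>v psi 1 1) \<bullet> y) *\<^sub>R xpp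
          + ((psi (-1) 1 \<otimes>\<^sub>v psi (-1) (-1) + psi (-1) (-1) \<otimes>\<^sub>v psi (-1) 1) \<bullet> y) *\<^sub>R xmp
          + ((psi 1 1 \<otimes>\<^sub>v psi (-1) 1 + psi (-1) 1 \<otimes>\<^sub>v psi 1 1) \<bullet> y) *\<^sub>R xpq
          + ((psi 1 (-1) \<otimes>\<^sub>v psi (-1) (-1) + psi (-1) (-1) \<otimes>\<^sub>v psi 1 (-1)) \<bullet> y) *\<^sub>R xmq)"
  using part1[OF assms] part2[OF assms] formula by blast

end
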